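(* Let $N\ge1$, $d\ge1$, $H\in(0,1)^N$, and let $v$ and $v(A,x)$ be defined as in the context. For any $n>1$, let $F_n=[1/n,n]^N$ and $\gamma_i=H_i^{-1}-1$. Then there is a constant $c_0>0$ depending on $n$ such that for all $0\le a<b\le\infty$ and all $x,y\in F_n$, $$\big\|(v(x)-v([a,b),x))-(v(y)-v([a,b),y))\big\|_{L^2}\le c_0\Big(\sum_{i=1}^N a^{\gamma_i}|x_i-y_i|+b^{-1}\Big),$$ with $b^{-1}=0$ when $b=\infty$.
   Context: For $\alpha\in(0,1)$ let $c_\alpha=\big(\int_{\mathbb{R}}\frac{1-\cos\xi}{|\xi|^{2\alpha+1}}d\xi\big)^{-1/2}$ and $c_H=\prod_{i=1}^Nc_{H_i}$. Let $f_0(t)=1-\cos t$, $f_1(t)=\sin t$. Let $W_p$, $p\in\{0,1\}^N$, be independent $\mathbb{R}^d$-valued Gaussian white noises on $\mathbb{R}^N$ (Lebesgue control measure). Define $v(x)=c_H\sum_{p\in\{0,1\}^N}\int_{\mathbb{R}^N}\prod_{i=1}^N\frac{f_{p_i}(x_i\xi_i)}{|\xi_i|^{H_i+1/2}}W_p(d\xi)$ for $x\in\mathbb{R}^N_+$ (an $(N,d)$-fractional Brownian sheet), and for Borel $A\subset[0,\infty)$ and $x\in(0,\infty)^N$, $v(A,x)=c_H\sum_{p\in\{0,1\}^N}\int_{\{\xi:\max_i|\xi_i|^{H_i}\in A\}}\prod_{i=1}^N\frac{f_{p_i}(x_i\xi_i)}{|\xi_i|^{H_i+1/2}}W_p(d\xi)$.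 $\|X\|_{L^2}=(\mathrm E|X|^2)^{1/2}$. *)

theory Defs
  imports "HOL-Probability.Probability"
begin

definition isonormal :: "'a measure \<Rightarrow> 's measure \<Rightarrow> (('s \<Rightarrow> real) \<Rightarrow> 'a \<Rightarrow> real) \<Rightarrow> bool" where
  "isonormal P S W \<longleftrightarrow> prob_space P \<and>
     (\<forall>f. f \<in> borel_measurable S \<and> integrable S (\<lambda>s. (f s)\<^sup>2) \<longrightarrow>
        W f \<in> borel_measurable P \<and>
        (if (\<integral>s. (f s)\<^sup>2 \<partial>S) = 0 then (AE \<omega> in P. W f \<omega> = 0)
         else distributed P lborel (W f) (normal_density 0 (sqrt (\<integral>s. (f s)\<^sup>2 \<partial>S))))) \<and>
     (\<forall>f g a b. f \<in> borel_measurable S \<and> integrable S (\<lambda>s. (f s)\<^sup>2) \<and>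
        g \<in> borel_measurable S \<and> integrable S (\<lambda>s. (g s)\<^sup>2) \<longrightarrow>
        (AE \<omega> in P. W (\<lambda>s. a * f s + b * g s) \<omega> = a * W f \<omega> + b * W g \<omega>))"

text \<open>A family (W_p), p in {0,1}^N, of independent R^d-valued Gaussian white noises on R^N
  with Lebesgue control measure = an isonormal process on L2({0,1}^N x {1..d} x R^N)
  (counting measure on the finite index part). The index p is encoded as 'n => bool,
  component k of R^d as k :: 'd.\<close>
definition white_noise_family ::
  "'a measure \<Rightarrow> (((('n::finite \<Rightarrow> bool) \<times> ('d::finite)) \<times> (real^'n) \<Rightarrow> real) \<Rightarrow> 'a \<Rightarrow> real) \<Rightarrow> bool" where
  "white_noise_family P W \<longleftrightarrow> isonormal P (count_space UNIV \<Otimes>\<^sub>M lborel) W"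

definition c_alpha :: "real \<Rightarrow> real" where
  "c_alpha \<alpha> = (\<integral>\<xi>. (1 - cos \<xi>) / \<bar>\<xi>\<bar> powr (2 * \<alpha> + 1) \<partial>lborel) powr (-1/2)"

definition c_H :: "real^'n::finite \<Rightarrow> real" where
  "c_H H = (\<Prod>i\<in>UNIV. c_alpha (H $ i))"

definition fp :: "bool \<Rightarrow> real \<Rightarrow> real" where
  "fp p t = (if p then sin t else 1 - cos t)"

text \<open>Kernel of the harmonizable representation, restricted to the frequency set
  {xi. max_i |xi_i|^{H_i} \<in> A}; A = UNIV gives the full kernel.\<close>
definition fbs_kernel :: "real^'n::finite \<Rightarrow> real set \<Rightarrow> real^'n \<Rightarrow> 'd \<Rightarrow>
    (('n \<Rightarrow> bool) \<times> 'd) \<times> (real^'n) \<Rightarrow> real" where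
  "fbs_kernel H A x k = (\<lambda>((p, k'), \<xi>).
     if k' = k \<and> Max (range (\<lambda>i. \<bar>\<xi> $ i\<bar> powr (H $ i))) \<in> A then
       c_H H * (\<Prod>i\<in>UNIV. fp (p i) (x $ i * \<xi> $ i) / \<bar>\<xi> $ i\<bar> powr (H $ i + 1/2))
     else 0)"

definition fbs :: "real^'n::finite \<Rightarrow> (((('n \<Rightarrow> bool) \<times> 'd::finite) \<times> (real^'n) \<Rightarrow> real) \<Rightarrow> 'a \<Rightarrow> real)
    \<Rightarrow> real^'n \<Rightarrow> 'a \<Rightarrow> real^'d" where
  "fbs H W x = (\<lambda>\<omega>. \<chi> k. W (fbs_kernel H UNIV x k) \<omega>)"

definition fbs_part :: "real^'n::finite \<Rightarrow> (((('n \<Rightarrow> bool) \<times> 'd::finite) \<times> (real^'n) \<Rightarrow> real) \<Rightarrow> 'a \<Rightarrow> real)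
    \<Rightarrow> real set \<Rightarrow> real^'n \<Rightarrow> 'a \<Rightarrow> real^'d" where
  "fbs_part H W A x = (\<lambda>\<omega>. \<chi> k. W (fbs_kernel H A x k) \<omega>)"

definition L2norm :: "'a measure \<Rightarrow> ('a \<Rightarrow> real^'d::finite) \<Rightarrow> real" where
  "L2norm P X = sqrt (\<integral>\<omega>. (norm (X \<omega>))\<^sup>2 \<partial>P)"

end

theory Submission
  imports Defs
begin

lemma even_nn_le:
  fixes f :: "real \<Rightarrow> real"
  assumes [measurable]: "f \<in> borel_measurable borel" and nn: "\<And>t. 0 \<le> f t"
  shows "(\<integral>\<^sup>+t. ennreal (f \<bar>t\<bar>) \<partial>lborel) \<le> 2 * (\<integral>\<^sup>+t. ennreal (indicator {0..} t * f t) \<partial>lborel)"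
proof -
  have "(\<integral>\<^sup>+t. ennreal (f \<bar>t\<bar>) \<partial>lborel) \<le>
        (\<integral>\<^sup>+t. ennreal (indicator {0..} t * f t) + ennreal (indicator {0..} (-t) * f (-t)) \<partial>lborel)"
    by (intro nn_integral_mono) (auto simp: indicator_def nn abs_if simp flip: ennreal_plus)
  also have "\<dots> = (\<integral>\<^sup>+t. ennreal (indicator {0..} t * f t) \<partial>lborel) + (\<integral>\<^sup>+t. ennreal (indicator {0..} (-t) * f (-t)) \<partial>lborel)"
    by (intro nn_integral_add) auto
  also have "(\<integral>\<^sup>+t. ennreal (indicator {0..} (-t) * f (-t)) \<partial>lborel) = (\<integral>\<^sup>+t. ennreal (indicator {0..} t * f t) \<partial>lborel)"
    by (subst nn_integral_real_affine[where c="-1" and t=0]) auto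
  finally show ?thesis by (simp add: mult_2)
qed

lemma nn_powr_from_0:
  assumes "e > -1" "c \<ge> 0"
  shows "(\<integral>\<^sup>+t. ennreal (indicator {0..c} t * t powr e) \<partial>lborel) = ennreal (c powr (e+1)/(e+1))"
  using nn_integral_has_integral_lebesgue[OF _ has_integral_powr_from_0[OF assms]] by simp

lemma nn_powr_to_inf:
  assumes "e < -1" "c > 0"
  shows "(\<integral>\<^sup>+t. ennreal (indicator {c..} t * t powr e) \<partial>lborel) = ennreal (-(c powr (e+1))/(e+1))"
  using nn_integral_has_integral_lebesgue[OF _ has_integral_powr_to_inf[OF assms]] by simp

lemma L2:
  assumes h: "0 < h" "h < 1" and a: "a \<ge> 0"
  shows "(\<integral>\<^sup>+t. ennreal (if \<bar>t\<bar> powr h < a then \<bar>t\<bar> powr (1-2*h) else 0) \<partial>lborel)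
         \<le> ennreal (a powr (2*(1/h-1)) / (1-h))"
proof -
  define c where "c = a powr (1/h)"
  have c0: "c \<ge> 0" by (simp add: c_def)
  have "(\<integral>\<^sup>+t. ennreal (if \<bar>t\<bar> powr h < a then \<bar>t\<bar> powr (1-2*h) else 0) \<partial>lborel)
     \<le> 2 * (\<integral>\<^sup>+t. ennreal (indicator {0..} t * (if t powr h < a then t powr (1-2*h) else 0)) \<partial>lborel)"
    by (rule even_nn_le[where f="\<lambda>t. if t powr h < a then t powr (1-2*h) else 0", simplified]) auto
  also have "(\<integral>\<^sup>+t. ennreal (indicator {0..} t * (if t powr h < a then t powr (1-2*h) else 0)) \<partial>lborel)
     \<le> (\<integral>\<^sup>+t. ennreal (indicator {0..c} t * t powr (1-2*h)) \<partial>lborel)"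
  proof (intro nn_integral_mono)
    fix t :: real
    show "ennreal (indicator {0..} t * (if t powr h < a then t powr (1-2*h) else 0))
          \<le> ennreal (indicator {0..c} t * t powr (1-2*h))"
    proof (cases "t \<ge> 0 \<and> t powr h < a")
      case True
      then have "(t powr h) powr (1/h) < a powr (1/h)"
        using h by (intro powr_less_mono2) auto
      then have "t \<le> c" using True h by (simp add: c_def powr_powr)
      then show ?thesis using True by (simp add: indicator_def)
    qed (auto simp: indicator_def)
  qed
  also have "\<dots> = ennreal (c powr (2-2*h)/(2-2*h))"
    using nn_powr_from_0[of "1-2*h" c] h c0 by simp
  finally have "(\<integral>\<^sup>+t. ennreal (if \<bar>t\<bar> powr h < a then \<bar>t\<bar> powr (1-2*h) else 0) \<partial>lborel)
     \<le> 2 * ennreal (c powr (2-2*h)/(2-2*h))" by (simp add: mult_left_mono)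
  also have "2 * ennreal (c powr (2-2*h)/(2-2*h)) = ennreal (a powr (2*(1/h-1)) / (1-h))"
  proof -
    have "c powr (2-2*h) = a powr (2*(1/h-1))"
      using h by (simp add: c_def powr_powr field_simps)
    moreover have "2 * ennreal (c powr (2-2*h)/(2-2*h)) = ennreal (2 * (c powr (2-2*h)/(2-2*h)))"
      using h by (subst ennreal_mult) auto
    ultimately show ?thesis using h by (simp add: field_simps)
  qed
  finally show ?thesis .
qed

lemma L3:
  assumes h: "0 < h" "h < 1" and b: "b > 0"
  shows "(\<integral>\<^sup>+t. ennreal (if b \<le> \<bar>t\<bar> powr h then \<bar>t\<bar> powr (-2*h-1) else 0) \<partial>lborel)
         \<le> ennreal (1 / (h * b^2))"
proof -
  define c where "c = b powr (1/h)"
  have c0: "c > 0" using b by (simp add: c_def)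
  have "(\<integral>\<^sup>+t. ennreal (if b \<le> \<bar>t\<bar> powr h then \<bar>t\<bar> powr (-2*h-1) else 0) \<partial>lborel)
     \<le> 2 * (\<integral>\<^sup>+t. ennreal (indicator {0..} t * (if b \<le> t powr h then t powr (-2*h-1) else 0)) \<partial>lborel)"
    by (rule even_nn_le[where f="\<lambda>t. if b \<le> t powr h then t powr (-2*h-1) else 0", simplified]) auto
  also have "(\<integral>\<^sup>+t. ennreal (indicator {0..} t * (if b \<le> t powr h then t powr (-2*h-1) else 0)) \<partial>lborel)
     \<le> (\<integral>\<^sup>+t. ennreal (indicator {c..} t * t powr (-2*h-1)) \<partial>lborel)"
  proof (intro nn_integral_mono)
    fix t :: real
    show "ennreal (indicator {0..} t * (if b \<le> t powr h then t powr (-2*h-1) else 0))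
          \<le> ennreal (indicator {c..} t * t powr (-2*h-1))"
    proof (cases "t \<ge> 0 \<and> b \<le> t powr h")
      case True
      then have "b powr (1/h) \<le> (t powr h) powr (1/h)"
        using h b by (intro powr_mono2) auto
      then have "c \<le> t" using True h by (simp add: c_def powr_powr)
      then show ?thesis using True by (simp add: indicator_def)
    qed (auto simp: indicator_def)
  qed
  also have "\<dots> = ennreal (-(c powr (-2*h))/(-2*h))"
    using nn_powr_to_inf[of "-2*h-1" c] h c0 by simp
  finally have "(\<integral>\<^sup>+t. ennreal (if b \<le> \<bar>t\<bar> powr h then \<bar>t\<bar> powr (-2*h-1) else 0) \<partial>lborel)
     \<le> 2 * ennreal (-(c powr (-2*h))/(-2*h))" by (simp add: mult_left_mono)
  also have "2 * ennreal (-(c powr (-2*h))/(-2*h)) = ennreal (1 / (h * b^2))"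
  proof -
    have "c powr (-2*h) = 1 / b^2"
    proof -
      have "c powr (-2*h) = b powr (-2)" using h by (simp add: c_def powr_powr)
      also have "\<dots> = 1 / b powr 2" by (simp add: powr_minus_divide)
      also have "b powr 2 = b^2" using b by (simp add: powr_numeral)
      finally show ?thesis .
    qed
    moreover have "2 * ennreal (-(c powr (-2*h))/(-2*h)) = ennreal (2 * (-(c powr (-2*h))/(-2*h)))"
      using h by (subst ennreal_mult) auto
    ultimately show ?thesis using h b by (simp add: field_simps)
  qed
  finally show ?thesis .
qed

lemma L1:
  assumes h: "0 < h" "h < 1"
  shows "(\<integral>\<^sup>+t. ennreal (min (t^2) 1 * \<bar>t\<bar> powr (-2*h-1)) \<partial>lborel) < \<infinity>"
proof -
  have "(\<integral>\<^sup>+t. ennreal (min (t^2) 1 * \<bar>t\<bar> powr (-2*h-1)) \<partial>lborel)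
     \<le> (\<integral>\<^sup>+t. ennreal (if \<bar>t\<bar> powr h < 1 then \<bar>t\<bar> powr (1-2*h) else 0)
           + ennreal (if 1 \<le> \<bar>t\<bar> powr h then \<bar>t\<bar> powr (-2*h-1) else 0) \<partial>lborel)"
  proof (intro nn_integral_mono)
    fix t :: real
    show "ennreal (min (t^2) 1 * \<bar>t\<bar> powr (-2*h-1)) \<le> ennreal (if \<bar>t\<bar> powr h < 1 then \<bar>t\<bar> powr (1-2*h) else 0)
           + ennreal (if 1 \<le> \<bar>t\<bar> powr h then \<bar>t\<bar> powr (-2*h-1) else 0)"
    proof (cases "t = 0")
      case False
      have e: "t^2 * \<bar>t\<bar> powr (-2*h-1) = \<bar>t\<bar> powr (1-2*h)"
      proof -
        have "t^2 = \<bar>t\<bar> powr 2" by (simp add: powr_numeral)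
        then have "t^2 * \<bar>t\<bar> powr (-2*h-1) = \<bar>t\<bar> powr (2 + (-2*h-1))"
          by (simp only: powr_add)
        then show ?thesis by simp
      qed
      show ?thesis
      proof (cases "\<bar>t\<bar> powr h < 1")
        case True
        then have "\<bar>t\<bar> < 1" using h ge_one_powr_ge_zero[of "\<bar>t\<bar>" h] by linarith
        then have "t^2 \<le> 1" by (simp add: abs_square_le_1)
        then show ?thesis using True e by simp
      next
        case False
        have "min (t^2) 1 * \<bar>t\<bar> powr (-2*h-1) \<le> \<bar>t\<bar> powr (-2*h-1)"
          by (rule mult_left_le_one_le) auto
        then show ?thesis using False by simp
      qed
    qed simp
  qed
  also have "\<dots> = (\<integral>\<^sup>+t. ennreal (if \<bar>t\<bar> powr h < 1 then \<bar>t\<bar> powr (1-2*h) else 0) \<partial>lborel)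
           + (\<integral>\<^sup>+t. ennreal (if 1 \<le> \<bar>t\<bar> powr h then \<bar>t\<bar> powr (-2*h-1) else 0) \<partial>lborel)"
    by (intro nn_integral_add) auto
  also have "\<dots> \<le> ennreal (1 powr (2*(1/h-1)) / (1-h)) + ennreal (1 / (h * 1^2))"
    by (intro add_mono L2 L3) (use h in auto)
  also have "\<dots> < \<infinity>" by simp
  finally show ?thesis .
qed

lemma Basis_vec_real: "(Basis :: (real^'n::finite) set) = range (\<lambda>i. axis i 1)"
  by (auto simp: Basis_vec_def)

lemma nn_integral_vec_prod:
  fixes f :: "'n::finite \<Rightarrow> real \<Rightarrow> real"
  assumes [measurable]: "\<And>i. f i \<in> borel_measurable borel" and nn: "\<And>i t. 0 \<le> f i t"
  shows "(\<integral>\<^sup>+\<xi>. ennreal (\<Prod>i\<in>UNIV. f i (\<xi> $ i)) \<partial>(lborel :: (real^'n) measure))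
       = (\<Prod>i\<in>UNIV. \<integral>\<^sup>+t. ennreal (f i t) \<partial>lborel)"
proof -
  define ax where "ax = (\<lambda>i::'n. axis i (1::real))"
  have inj: "inj ax" by (auto simp: ax_def inj_def axis_eq_axis)
  define g where "g = (\<lambda>b t. ennreal (f (inv ax b) t))"
  have [measurable]: "g b \<in> borel_measurable borel" for b unfolding g_def by measurable
  have B: "(Basis :: (real^'n) set) = range ax" by (simp add: Basis_vec_real ax_def)
  have "(\<integral>\<^sup>+x. (\<Prod>b\<in>Basis. g b (x \<bullet> b)) \<partial>(lborel :: (real^'n) measure)) = (\<Prod>b\<in>Basis. (\<integral>\<^sup>+x. g b x \<partial>lborel))"
    by (rule nn_integral_lborel_prod) auto
  also have "(\<Prod>b\<in>Basis. (\<integral>\<^sup>+x. g b x \<partial>lborel)) = (\<Prod>i\<in>UNIV. \<integral>\<^sup>+t. ennreal (f i t) \<partial>lborel)"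
    unfolding B by (subst prod.reindex[OF inj]) (simp add: g_def inv_f_f[OF inj])
  also have "(\<lambda>x::real^'n. (\<Prod>b\<in>Basis. g b (x \<bullet> b))) = (\<lambda>x. ennreal (\<Prod>i\<in>UNIV. f i (x $ i)))"
    unfolding B by (subst prod.reindex[OF inj])
      (simp add: g_def inv_f_f[OF inj, unfolded ax_def] ax_def inner_axis prod_ennreal nn)
  finally show ?thesis .
qed

lemma sin_lip: fixes w z :: real shows "\<bar>sin w - sin z\<bar> \<le> \<bar>w - z\<bar>"
proof -
  have "\<bar>sin w - sin z\<bar> = 2 * \<bar>sin ((w - z) / 2)\<bar> * \<bar>cos ((w + z) / 2)\<bar>"
    by (simp add: sin_diff_sin abs_mult)
  also have "\<dots> \<le> 2 * \<bar>(w - z) / 2\<bar> * 1"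
    by (intro mult_mono abs_sin_x_le_abs_x) auto
  finally show ?thesis by simp
qed

lemma cos_lip: fixes w z :: real shows "\<bar>cos w - cos z\<bar> \<le> \<bar>w - z\<bar>"
proof -
  have "\<bar>cos w - cos z\<bar> = 2 * \<bar>sin ((w + z) / 2)\<bar> * \<bar>sin ((z - w) / 2)\<bar>"
    by (simp add: cos_diff_cos abs_mult)
  also have "\<dots> \<le> 2 * 1 * \<bar>(z - w) / 2\<bar>"
    by (intro mult_mono abs_sin_x_le_abs_x) auto
  finally show ?thesis by simp
qed

lemma fp_lip: "\<bar>fp p s - fp p s'\<bar> \<le> \<bar>s - s'\<bar>"
  using sin_lip[of s s'] cos_lip[of s' s] by (auto simp: fp_def abs_minus_commute)

lemma fp_abs: "\<bar>fp p s\<bar> \<le> 2 * min \<bar>s\<bar> 1"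
proof -
  have "\<bar>fp p s\<bar> \<le> \<bar>s\<bar>" using fp_lip[of p s 0] by (simp add: fp_def split: if_splits)
  moreover have "\<bar>fp p s\<bar> \<le> 2"
    using sin_le_one[of s] sin_ge_minus_one[of s] cos_le_one[of s] cos_ge_minus_one[of s]
    unfolding fp_def by (smt (verit))
  ultimately show ?thesis by linarith
qed

lemma fp_sq: "(fp p s)^2 \<le> 4 * min (s^2) 1"
proof -
  have "(fp p s)^2 = \<bar>fp p s\<bar>^2" by simp
  also have "\<dots> \<le> (2 * min \<bar>s\<bar> 1)^2" by (rule power_mono[OF fp_abs]) simp
  also have "\<dots> = 4 * min (s^2) 1"
    by (auto simp: min_def power_mult_distrib abs_le_square_iff)
       (metis abs_le_square_iff abs_one one_power2)+
  finally show ?thesis .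
qed

lemma min_scale: fixes x m t :: real assumes "\<bar>x\<bar> \<le> m" "1 \<le> m" shows "min ((x*t)^2) 1 \<le> m^2 * min (t^2) 1"
proof -
  have "x^2 \<le> m^2" using power_mono[OF assms(1) abs_ge_zero, of 2] by simp
  then have "(x*t)^2 \<le> m^2 * t^2"
    by (simp add: power_mult_distrib mult_right_mono)
  moreover have "1 \<le> m^2" using assms by simp
  ultimately show ?thesis by (auto simp: min_def)
qed

lemma prod_diff_le:
  fixes u w M :: "'i \<Rightarrow> real"
  assumes "finite I" "\<And>i. i \<in> I \<Longrightarrow> \<bar>u i\<bar> \<le> M i" "\<And>i. i \<in> I \<Longrightarrow> \<bar>w i\<bar> \<le> M i"
  shows "\<bar>prod u I - prod w I\<bar> \<le> (\<Sum>i\<in>I. \<bar>u i - w i\<bar> * prod M (I - {i}))"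
  using assms
proof (induction I rule: finite_induct)
  case empty then show ?case by simp
next
  case (insert a A)
  have M0: "\<And>i. i \<in> insert a A \<Longrightarrow> 0 \<le> M i" using insert.prems(1) by (meson abs_ge_zero order_trans)
  have UA: "\<bar>prod u A\<bar> \<le> prod M A"
    unfolding abs_prod by (intro prod_mono) (auto intro: insert.prems)
  have IH: "\<bar>prod u A - prod w A\<bar> \<le> (\<Sum>i\<in>A. \<bar>u i - w i\<bar> * prod M (A - {i}))"
    using insert by auto
  have "\<bar>prod u (insert a A) - prod w (insert a A)\<bar> = \<bar>(u a - w a) * prod u A + w a * (prod u A - prod w A)\<bar>"
    using insert by (simp add: algebra_simps)
  also have "\<dots> \<le> \<bar>u a - w a\<bar> * \<bar>prod u A\<bar> + \<bar>w a\<bar> * \<bar>prod u A - prod w A\<bar>"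
    by (simp add: abs_mult abs_triangle_ineq[THEN order_trans])
  also have "\<dots> \<le> \<bar>u a - w a\<bar> * prod M A + M a * (\<Sum>i\<in>A. \<bar>u i - w i\<bar> * prod M (A - {i}))"
    by (intro add_mono mult_mono UA IH insert.prems) (auto intro: M0)
  also have "\<dots> = (\<Sum>i\<in>insert a A. \<bar>u i - w i\<bar> * prod M (insert a A - {i}))"
  proof -
    have "prod M (insert a A - {i}) = M a * prod M (A - {i})" if "i \<in> A" for i
    proof -
      have "insert a A - {i} = insert a (A - {i})" using that insert.hyps by auto
      then show ?thesis using insert.hyps by simp
    qed
    moreover have "insert a A - {a} = A" using insert.hyps by auto
    ultimately show ?thesis using insert.hyps
      by (simp add: sum_distrib_left algebra_simps cong: sum.cong)
  qed
  finally show ?case .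
qed

lemma prod_diff_sq:
  fixes u w M :: "'i \<Rightarrow> real"
  assumes "finite I" "\<And>i. i \<in> I \<Longrightarrow> \<bar>u i\<bar> \<le> M i" "\<And>i. i \<in> I \<Longrightarrow> \<bar>w i\<bar> \<le> M i"
  shows "(prod u I - prod w I)^2 \<le> card I * (\<Sum>i\<in>I. (u i - w i)^2 * (\<Prod>j\<in>I - {i}. (M j)^2))"
proof -
  have "(prod u I - prod w I)^2 = \<bar>prod u I - prod w I\<bar>^2" by simp
  also have "\<dots> \<le> (\<Sum>i\<in>I. \<bar>u i - w i\<bar> * prod M (I - {i}))^2"
    by (intro power_mono prod_diff_le assms) auto
  also have "\<dots> \<le> (\<Sum>i\<in>I. (\<bar>u i - w i\<bar> * prod M (I - {i}))^2) * card I"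
    by (rule sum_squared_le_sum_of_squares)
  also have "\<dots> = card I * (\<Sum>i\<in>I. (u i - w i)^2 * (\<Prod>j\<in>I - {i}. (M j)^2))"
    by (simp add: power_mult_distrib prod_power_distrib mult.commute)
  finally show ?thesis .
qed

lemma prod_mono_ennreal: "(\<And>i. i \<in> A \<Longrightarrow> f i \<le> g i) \<Longrightarrow> prod f A \<le> prod (g::_\<Rightarrow>ennreal) A"
  by (induction A rule: infinite_finite_induct) (auto intro!: mult_mono)

lemma prod_bound:
  fixes f :: "'n::finite \<Rightarrow> real \<Rightarrow> real" and B :: "'n \<Rightarrow> real"
  assumes [measurable]: "\<And>i. f i \<in> borel_measurable borel" and nn: "\<And>i t. 0 \<le> f i t"
    and B: "\<And>j. (\<integral>\<^sup>+t. ennreal (f j t) \<partial>lborel) \<le> ennreal (B j)" and B0: "\<And>j. 0 \<le> B j"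
  shows "(\<integral>\<^sup>+\<xi>. ennreal (\<Prod>j\<in>UNIV. f j (\<xi> $ j)) \<partial>(lborel :: (real^'n) measure)) \<le> ennreal (\<Prod>j\<in>UNIV. B j)"
proof -
  have "(\<integral>\<^sup>+\<xi>. ennreal (\<Prod>j\<in>UNIV. f j (\<xi> $ j)) \<partial>(lborel :: (real^'n) measure))
     = (\<Prod>j\<in>UNIV. \<integral>\<^sup>+t. ennreal (f j t) \<partial>lborel)" by (rule nn_integral_vec_prod) (auto simp: nn)
  also have "\<dots> \<le> (\<Prod>j\<in>UNIV. ennreal (B j))" by (rule prod_mono_ennreal) (rule B)
  also have "\<dots> = ennreal (\<Prod>j\<in>UNIV. B j)" by (simp add: prod_ennreal B0)
  finally show ?thesis .
qed

definition phi :: "real \<Rightarrow> real \<Rightarrow> real" where "phi h t = min (t^2) 1 * \<bar>t\<bar> powr (-2*h-1)"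
definition uk :: "bool \<Rightarrow> real \<Rightarrow> real \<Rightarrow> real \<Rightarrow> real" where "uk p h x t = fp p (x*t) / \<bar>t\<bar> powr (h + 1/2)"

lemma phi_nn: "0 \<le> phi h t" by (simp add: phi_def)
lemma phi_le: "phi h t \<le> \<bar>t\<bar> powr (-2*h-1)"
  unfolding phi_def by (rule mult_left_le_one_le) auto

lemma phi_meas[measurable]: "phi h \<in> borel_measurable borel" unfolding phi_def by measurable

lemma sq_div_powr: fixes t z h :: real shows "t \<noteq> 0 \<Longrightarrow> (z / \<bar>t\<bar> powr (h + 1/2))^2 = z^2 * \<bar>t\<bar> powr (-2*h-1)"
proof -
  assume t: "t \<noteq> 0"
  have "(\<bar>t\<bar> powr (h + 1/2))^2 = \<bar>t\<bar> powr (2*h+1)"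
    using powr_add[of "\<bar>t\<bar>" "h+1/2" "h+1/2"] by (simp add: power2_eq_square)
  moreover have "\<bar>t\<bar> powr (-2*h-1) = 1 / \<bar>t\<bar> powr (2*h+1)"
    using powr_minus_divide[of "\<bar>t\<bar>" "2*h+1"] by simp
  ultimately show ?thesis by (simp add: power_divide)
qed

lemma uk_sq: assumes "\<bar>x\<bar> \<le> m" "1 \<le> m" shows "(uk p h x t)^2 \<le> 4 * m^2 * phi h t"
proof (cases "t = 0")
  case True then show ?thesis by (simp add: uk_def phi_def)
next
  case False
  have "(uk p h x t)^2 = (fp p (x*t))^2 * \<bar>t\<bar> powr (-2*h-1)" using False by (simp add: uk_def sq_div_powr)
  also have "\<dots> \<le> (4 * (m^2 * min (t^2) 1)) * \<bar>t\<bar> powr (-2*h-1)"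
    by (intro mult_right_mono order_trans[OF fp_sq] mult_left_mono min_scale assms) auto
  finally show ?thesis by (simp add: phi_def mult_ac)
qed

lemma uk_diff: "(uk p h x t - uk p h y t)^2 \<le> (x - y)^2 * \<bar>t\<bar> powr (1-2*h)"
proof (cases "t = 0")
  case True then show ?thesis by (simp add: uk_def)
next
  case False
  have "(uk p h x t - uk p h y t)^2 = (fp p (x*t) - fp p (y*t))^2 * \<bar>t\<bar> powr (-2*h-1)"
    using False by (simp add: uk_def sq_div_powr flip: diff_divide_distrib)
  also have "(fp p (x*t) - fp p (y*t))^2 \<le> ((x-y)^2 * t^2)"
  proof -
    have "(fp p (x*t) - fp p (y*t))^2 = \<bar>fp p (x*t) - fp p (y*t)\<bar>^2" by simp
    also have "\<dots> \<le> \<bar>x*t - y*t\<bar>^2" by (intro power_mono fp_lip) auto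
    finally show ?thesis by (simp add: power_mult_distrib left_diff_distrib[symmetric] power2_abs)
  qed
  then have "(fp p (x*t) - fp p (y*t))^2 * \<bar>t\<bar> powr (-2*h-1) \<le> ((x-y)^2 * t^2) * \<bar>t\<bar> powr (-2*h-1)"
    by (rule mult_right_mono) simp
  also have "((x-y)^2 * t^2) * \<bar>t\<bar> powr (-2*h-1) = (x - y)^2 * \<bar>t\<bar> powr (1-2*h)"
  proof -
    have "t^2 = \<bar>t\<bar> powr 2" by (simp add: powr_numeral)
    then have "t^2 * \<bar>t\<bar> powr (-2*h-1) = \<bar>t\<bar> powr (2 + (-2*h-1))" by (simp only: powr_add)
    then show ?thesis by (simp add: mult.assoc)
  qed
  finally show ?thesis .
qed

definition Kf :: "real^'n::finite \<Rightarrow> ('n \<Rightarrow> bool) \<Rightarrow> real^'n \<Rightarrow> real^'n \<Rightarrow> real" where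
  "Kf H p x \<xi> = (\<Prod>i\<in>UNIV. uk (p i) (H$i) (x$i) (\<xi>$i))"

definition lo :: "real^'n::finite \<Rightarrow> real \<Rightarrow> real^'n \<Rightarrow> real^'n \<Rightarrow> real \<Rightarrow> 'n \<Rightarrow> 'n \<Rightarrow> real \<Rightarrow> real" where
  "lo H m x y a i j t = (if j = i then (if \<bar>t\<bar> powr (H$i) < a then (x$i - y$i)^2 * \<bar>t\<bar> powr (1-2*H$i) else 0)
      else 4*m^2*phi (H$j) t)"

definition hi :: "real^'n::finite \<Rightarrow> real \<Rightarrow> real \<Rightarrow> 'n \<Rightarrow> 'n \<Rightarrow> real \<Rightarrow> real" where
  "hi H m b i j t = (if j = i then (if b \<le> \<bar>t\<bar> powr (H$i) then 4*m^2*\<bar>t\<bar> powr (-2*H$i-1) else 0)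
      else 4*m^2*phi (H$j) t)"

lemma lo_nn: "0 \<le> lo H m x y a i j t" by (simp add: lo_def phi_nn)
lemma hi_nn: "0 \<le> hi H m b i j t" by (simp add: hi_def phi_nn)
lemma lo_meas[measurable]: "lo H m x y a i j \<in> borel_measurable borel" unfolding lo_def by measurable
lemma hi_meas[measurable]: "hi H m b i j \<in> borel_measurable borel" unfolding hi_def by measurable

lemma uk_abs: assumes "\<bar>x\<bar> \<le> m" "1 \<le> m" shows "\<bar>uk p h x t\<bar> \<le> sqrt (4 * m^2 * phi h t)"
proof -
  have "\<bar>uk p h x t\<bar> = sqrt ((uk p h x t)^2)" by simp
  also have "\<dots> \<le> sqrt (4 * m^2 * phi h t)" by (intro real_sqrt_le_mono uk_sq assms)
  finally show ?thesis .
qed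

lemma low_pt:
  fixes H x y \<xi> :: "real^'n::finite"
  assumes x: "\<And>i. \<bar>x$i\<bar> \<le> m" and y: "\<And>i. \<bar>y$i\<bar> \<le> m" and m: "1 \<le> m"
    and \<xi>: "\<And>i. \<bar>\<xi>$i\<bar> powr (H$i) < a"
  shows "(Kf H p x \<xi> - Kf H p y \<xi>)^2 \<le> CARD('n) * (\<Sum>i\<in>UNIV. \<Prod>j\<in>UNIV. lo H m x y a i j (\<xi>$j))"
proof -
  define M where "M j = sqrt (4 * m^2 * phi (H$j) (\<xi>$j))" for j
  have M2: "(M j)^2 = 4 * m^2 * phi (H$j) (\<xi>$j)" for j unfolding M_def by (simp add: phi_nn)
  have "(Kf H p x \<xi> - Kf H p y \<xi>)^2 \<le> CARD('n) * (\<Sum>i\<in>UNIV. (uk (p i) (H$i) (x$i) (\<xi>$i) - uk (p i) (H$i) (y$i) (\<xi>$i))^2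
           * (\<Prod>j\<in>UNIV - {i}. (M j)^2))"
    unfolding Kf_def by (rule prod_diff_sq) (auto simp: M_def intro!: uk_abs x y m)
  also have "\<dots> \<le> CARD('n) * (\<Sum>i\<in>UNIV. \<Prod>j\<in>UNIV. lo H m x y a i j (\<xi>$j))"
  proof (intro mult_left_mono sum_mono)
    fix i :: 'n
    have "(\<Prod>j\<in>UNIV. lo H m x y a i j (\<xi>$j)) = lo H m x y a i i (\<xi>$i) * (\<Prod>j\<in>UNIV - {i}. lo H m x y a i j (\<xi>$j))"
      by (rule prod.remove) auto
    also have "(\<Prod>j\<in>UNIV - {i}. lo H m x y a i j (\<xi>$j)) = (\<Prod>j\<in>UNIV - {i}. (M j)^2)"
      by (rule prod.cong) (auto simp: lo_def M2)
    also have "lo H m x y a i i (\<xi>$i) = (x$i - y$i)^2 * \<bar>\<xi>$i\<bar> powr (1-2*H$i)"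
      using \<xi>[of i] by (simp add: lo_def)
    finally show "(uk (p i) (H$i) (x$i) (\<xi>$i) - uk (p i) (H$i) (y$i) (\<xi>$i))^2 * (\<Prod>j\<in>UNIV - {i}. (M j)^2)
        \<le> (\<Prod>j\<in>UNIV. lo H m x y a i j (\<xi>$j))"
      by (simp add: mult_right_mono uk_diff prod_nonneg)
  qed simp
  finally show ?thesis .
qed

lemma Kf_sq:
  fixes H x \<xi> :: "real^'n::finite"
  assumes x: "\<And>i. \<bar>x$i\<bar> \<le> m" and m: "1 \<le> m"
  shows "(Kf H p x \<xi>)^2 \<le> (\<Prod>j\<in>UNIV. 4*m^2*phi (H$j) (\<xi>$j))"
  unfolding Kf_def prod_power_distrib by (intro prod_mono) (auto intro: uk_sq x m)

lemma high_pt: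
  fixes H x y \<xi> :: "real^'n::finite"
  assumes x: "\<And>i. \<bar>x$i\<bar> \<le> m" and y: "\<And>i. \<bar>y$i\<bar> \<le> m" and m: "1 \<le> m"
    and \<xi>: "b \<le> \<bar>\<xi>$i\<bar> powr (H$i)"
  shows "(Kf H p x \<xi> - Kf H p y \<xi>)^2 \<le> 4 * (\<Prod>j\<in>UNIV. hi H m b i j (\<xi>$j))"
proof -
  have "(Kf H p x \<xi> - Kf H p y \<xi>)^2 \<le> 2 * (Kf H p x \<xi>)^2 + 2 * (Kf H p y \<xi>)^2"
    by (smt (verit) zero_le_power2 power2_diff power2_sum)
  also have "\<dots> \<le> 2 * (\<Prod>j\<in>UNIV. 4*m^2*phi (H$j) (\<xi>$j)) + 2 * (\<Prod>j\<in>UNIV. 4*m^2*phi (H$j) (\<xi>$j))"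
    by (intro add_mono mult_left_mono Kf_sq x y m) auto
  also have "(\<Prod>j\<in>UNIV. 4*m^2*phi (H$j) (\<xi>$j)) \<le> (\<Prod>j\<in>UNIV. hi H m b i j (\<xi>$j))"
    using phi_le[of "H$i" "\<xi>$i"] by (intro prod_mono) (auto simp: hi_def phi_nn \<xi> intro!: mult_left_mono)
  finally show ?thesis by simp
qed

definition Phi :: "real \<Rightarrow> real" where "Phi h = enn2real (\<integral>\<^sup>+t. ennreal (phi h t) \<partial>lborel)"

lemma Phi_eq: assumes "0 < h" "h < 1" shows "(\<integral>\<^sup>+t. ennreal (phi h t) \<partial>lborel) = ennreal (Phi h)"
  using L1[OF assms] unfolding Phi_def phi_def by (simp add: less_top)

lemma Phi_nn: "0 \<le> Phi h" by (simp add: Phi_def)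

lemma nn_cmult: assumes "0 \<le> c" "\<And>t. 0 \<le> f t" "f \<in> borel_measurable borel"
  shows "(\<integral>\<^sup>+t. ennreal (c * f t) \<partial>lborel) = ennreal c * (\<integral>\<^sup>+t. ennreal (f t) \<partial>lborel)"
  using assms by (simp add: ennreal_mult nn_integral_cmult)

lemma prod_rest_le:
  fixes g :: "'n::finite \<Rightarrow> real"
  assumes "\<And>j. 0 \<le> g j"
  shows "(\<Prod>j\<in>UNIV - {i}. g j) \<le> (\<Prod>j\<in>UNIV. max 1 (g j))"
proof -
  have "(\<Prod>j\<in>UNIV - {i}. g j) \<le> (\<Prod>j\<in>UNIV - {i}. max 1 (g j))"
    by (intro prod_mono) (auto simp: assms)
  also have "\<dots> \<le> max 1 (g i) * (\<Prod>j\<in>UNIV - {i}. max 1 (g j))"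
  proof -
    have X0: "0 \<le> (\<Prod>j\<in>UNIV - {i}. max 1 (g j))" by (intro prod_nonneg) auto
    have "1 * (\<Prod>j\<in>UNIV - {i}. max 1 (g j)) \<le> max 1 (g i) * (\<Prod>j\<in>UNIV - {i}. max 1 (g j))"
      by (rule mult_right_mono) (auto simp: X0)
    then show ?thesis by simp
  qed
  also have "\<dots> = (\<Prod>j\<in>UNIV. max 1 (g j))" by (rule prod.remove[symmetric]) auto
  finally show ?thesis .
qed

definition P0 :: "real^'n::finite \<Rightarrow> real \<Rightarrow> real" where
  "P0 H m = (\<Prod>j\<in>UNIV. max 1 (4*m^2*Phi (H$j)))"

lemma P0_ge: "P0 H m \<ge> 1" unfolding P0_def by (rule prod_ge_1) auto

lemma lo_int:
  fixes H x y :: "real^'n::finite"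
  assumes H: "\<And>i. 0 < H$i \<and> H$i < 1" and a: "0 \<le> a"
  shows "(\<integral>\<^sup>+\<xi>. ennreal (\<Prod>j\<in>UNIV. lo H m x y a i j (\<xi>$j)) \<partial>(lborel :: (real^'n) measure))
      \<le> ennreal (P0 H m * (1/(1-H$i)) * (a powr (1/H$i - 1) * \<bar>x$i - y$i\<bar>)^2)"
proof -
  define B where "B j = (if j = i then (x$i - y$i)^2 * (a powr (2*(1/H$i-1)) / (1-H$i)) else 4*m^2*Phi (H$j))" for j
  have B0: "0 \<le> B j" for j using H[of i] by (auto simp: B_def Phi_nn)
  have "(\<integral>\<^sup>+\<xi>. ennreal (\<Prod>j\<in>UNIV. lo H m x y a i j (\<xi>$j)) \<partial>(lborel :: (real^'n) measure)) \<le> ennreal (\<Prod>j\<in>UNIV. B j)"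
  proof (rule prod_bound[OF lo_meas lo_nn _ B0])
    fix j
    show "(\<integral>\<^sup>+t. ennreal (lo H m x y a i j t) \<partial>lborel) \<le> ennreal (B j)"
    proof (cases "j = i")
      case True
      have "(\<integral>\<^sup>+t. ennreal (lo H m x y a i j t) \<partial>lborel)
          = (\<integral>\<^sup>+t. ennreal ((x$i - y$i)^2 * (if \<bar>t\<bar> powr (H$i) < a then \<bar>t\<bar> powr (1-2*H$i) else 0)) \<partial>lborel)"
        using True by (intro nn_integral_cong) (simp add: lo_def)
      also have "\<dots> = ennreal ((x$i - y$i)^2) * (\<integral>\<^sup>+t. ennreal (if \<bar>t\<bar> powr (H$i) < a then \<bar>t\<bar> powr (1-2*H$i) else 0) \<partial>lborel)"
        by (rule nn_cmult) auto
      also have "\<dots> \<le> ennreal ((x$i - y$i)^2) * ennreal (a powr (2*(1/H$i-1)) / (1-H$i))"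
        by (intro mult_left_mono L2) (use H[of i] a in auto)
      also have "\<dots> = ennreal (B j)" using True H[of i] by (subst ennreal_mult[symmetric]) (auto simp: B_def)
      finally show ?thesis .
    next
      case False
      have "(\<integral>\<^sup>+t. ennreal (lo H m x y a i j t) \<partial>lborel) = (\<integral>\<^sup>+t. ennreal (4*m^2 * phi (H$j) t) \<partial>lborel)"
        using False by (intro nn_integral_cong) (simp add: lo_def)
      also have "\<dots> = ennreal (4*m^2) * ennreal (Phi (H$j))"
        by (subst nn_cmult) (auto simp: phi_nn Phi_eq H)
      also have "\<dots> = ennreal (B j)" using False by (simp add: B_def ennreal_mult Phi_nn)
      finally show ?thesis by simp
    qed
  qed
  also have "(\<Prod>j\<in>UNIV. B j) \<le> P0 H m * (1/(1-H$i)) * (a powr (1/H$i - 1) * \<bar>x$i - y$i\<bar>)^2"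
  proof -
    have e1: "(\<Prod>j\<in>UNIV. B j) = B i * (\<Prod>j\<in>UNIV - {i}. B j)" by (rule prod.remove) auto
    have "(\<Prod>j\<in>UNIV - {i}. B j) = (\<Prod>j\<in>UNIV - {i}. 4*m^2*Phi (H$j))"
      by (rule prod.cong) (auto simp: B_def)
    also have "\<dots> \<le> P0 H m" unfolding P0_def by (rule prod_rest_le) (simp add: Phi_nn)
    finally have "(\<Prod>j\<in>UNIV. B j) \<le> B i * P0 H m" unfolding e1 by (rule mult_left_mono) (rule B0)
    moreover have "B i = (1/(1-H$i)) * (a powr (1/H$i - 1) * \<bar>x$i - y$i\<bar>)^2"
    proof -
      have "a powr (2*(1/H$i-1)) = (a powr (1/H$i - 1))^2"
        using powr_add[of a "1/H$i - 1" "1/H$i - 1"] by (simp add: power2_eq_square mult_2)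
      then show ?thesis by (simp add: B_def power_mult_distrib power2_abs)
    qed
    ultimately show ?thesis by (simp add: mult_ac)
  qed
  then have "ennreal (\<Prod>j\<in>UNIV. B j) \<le> ennreal (P0 H m * (1/(1-H$i)) * (a powr (1/H$i - 1) * \<bar>x$i - y$i\<bar>)^2)"
    by (rule ennreal_leI)
  finally show ?thesis .
qed

lemma hi_int:
  fixes H :: "real^'n::finite"
  assumes H: "\<And>i. 0 < H$i \<and> H$i < 1" and b: "0 < b"
  shows "(\<integral>\<^sup>+\<xi>. ennreal (\<Prod>j\<in>UNIV. hi H m b i j (\<xi>$j)) \<partial>(lborel :: (real^'n) measure))
      \<le> ennreal (P0 H m * (4*m^2/H$i) * (1/b)^2)"
proof -
  define B where "B j = (if j = i then 4*m^2 * (1 / (H$i * b^2)) else 4*m^2*Phi (H$j))" for j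
  have B0: "0 \<le> B j" for j using H[of i] by (auto simp: B_def Phi_nn)
  have "(\<integral>\<^sup>+\<xi>. ennreal (\<Prod>j\<in>UNIV. hi H m b i j (\<xi>$j)) \<partial>(lborel :: (real^'n) measure)) \<le> ennreal (\<Prod>j\<in>UNIV. B j)"
  proof (rule prod_bound[OF hi_meas hi_nn _ B0])
    fix j
    show "(\<integral>\<^sup>+t. ennreal (hi H m b i j t) \<partial>lborel) \<le> ennreal (B j)"
    proof (cases "j = i")
      case True
      have "(\<integral>\<^sup>+t. ennreal (hi H m b i j t) \<partial>lborel)
          = (\<integral>\<^sup>+t. ennreal ((4*m^2) * (if b \<le> \<bar>t\<bar> powr (H$i) then \<bar>t\<bar> powr (-2*H$i-1) else 0)) \<partial>lborel)"
        using True by (intro nn_integral_cong) (simp add: hi_def)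
      also have "\<dots> = ennreal (4*m^2) * (\<integral>\<^sup>+t. ennreal (if b \<le> \<bar>t\<bar> powr (H$i) then \<bar>t\<bar> powr (-2*H$i-1) else 0) \<partial>lborel)"
        by (rule nn_cmult) auto
      also have "\<dots> \<le> ennreal (4*m^2) * ennreal (1 / (H$i * b^2))"
        by (intro mult_left_mono L3) (use H[of i] b in auto)
      also have "\<dots> = ennreal (B j)" using True H[of i] by (subst ennreal_mult[symmetric]) (auto simp: B_def)
      finally show ?thesis .
    next
      case False
      have "(\<integral>\<^sup>+t. ennreal (hi H m b i j t) \<partial>lborel) = (\<integral>\<^sup>+t. ennreal (4*m^2 * phi (H$j) t) \<partial>lborel)"
        using False by (intro nn_integral_cong) (simp add: hi_def)
      also have "\<dots> = ennreal (4*m^2) * ennreal (Phi (H$j))"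
        by (subst nn_cmult) (auto simp: phi_nn Phi_eq H)
      also have "\<dots> = ennreal (B j)" using False by (simp add: B_def ennreal_mult Phi_nn)
      finally show ?thesis by simp
    qed
  qed
  also have "(\<Prod>j\<in>UNIV. B j) \<le> P0 H m * (4*m^2/H$i) * (1/b)^2"
  proof -
    have e1: "(\<Prod>j\<in>UNIV. B j) = B i * (\<Prod>j\<in>UNIV - {i}. B j)" by (rule prod.remove) auto
    have "(\<Prod>j\<in>UNIV - {i}. B j) = (\<Prod>j\<in>UNIV - {i}. 4*m^2*Phi (H$j))"
      by (rule prod.cong) (auto simp: B_def)
    also have "\<dots> \<le> P0 H m" unfolding P0_def by (rule prod_rest_le) (simp add: Phi_nn)
    finally have "(\<Prod>j\<in>UNIV. B j) \<le> B i * P0 H m" unfolding e1 by (rule mult_left_mono) (rule B0)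
    moreover have "B i = (4*m^2/H$i) * (1/b)^2" by (simp add: B_def power_divide)
    ultimately show ?thesis by (simp add: mult_ac)
  qed
  then have "ennreal (\<Prod>j\<in>UNIV. B j) \<le> ennreal (P0 H m * (4*m^2/H$i) * (1/b)^2)"
    by (rule ennreal_leI)
  finally show ?thesis .
qed

definition Mx :: "real^'n::finite \<Rightarrow> real^'n \<Rightarrow> real" where
  "Mx H \<xi> = Max (range (\<lambda>i. \<bar>\<xi>$i\<bar> powr (H$i)))"

lemma prod_lo_meas[measurable]: "(\<lambda>\<xi>::real^'n::finite. \<Prod>j\<in>UNIV. lo H m x y a i j (\<xi>$j)) \<in> borel_measurable borel"
  by measurable
lemma prod_hi_meas[measurable]: "(\<lambda>\<xi>::real^'n::finite. \<Prod>j\<in>UNIV. hi H m b i j (\<xi>$j)) \<in> borel_measurable borel"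
  by measurable

lemma total_int:
  fixes H x y :: "real^'n::finite" and b :: ereal
  assumes H: "\<And>i. 0 < H$i \<and> H$i < 1" and x: "\<And>i. \<bar>x$i\<bar> \<le> m" and y: "\<And>i. \<bar>y$i\<bar> \<le> m" and m: "1 \<le> m"
    and a: "0 \<le> a" and ab: "ereal a < b"
  shows "(\<integral>\<^sup>+\<xi>. ennreal ((if a \<le> Mx H \<xi> \<and> ereal (Mx H \<xi>) < b then 0 else 1) * (Kf H p x \<xi> - Kf H p y \<xi>)^2) \<partial>lborel)
    \<le> ennreal (CARD('n) * P0 H m * (\<Sum>j\<in>UNIV. 1/(1-H$j)) * (\<Sum>i\<in>UNIV. (a powr (1/H$i - 1) * \<bar>x$i - y$i\<bar>)^2)
               + 16 * m^2 * P0 H m * (\<Sum>j\<in>UNIV. 1/H$j) * (if b = \<infinity> then 0 else (1 / real_of_ereal b)^2))"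
proof -
  define cb :: real where "cb = (if b = \<infinity> then 0 else 1)"
  define \<beta> where "\<beta> = real_of_ereal b"
  define g where "g i \<xi> = CARD('n) * (\<Prod>j\<in>UNIV. lo H m x y a i j (\<xi>$j)) + cb * 4 * (\<Prod>j\<in>UNIV. hi H m \<beta> i j (\<xi>$j))"
    for i and \<xi> :: "real^'n"
  have g0: "0 \<le> g i \<xi>" for i \<xi> unfolding g_def cb_def
    by (intro add_nonneg_nonneg mult_nonneg_nonneg prod_nonneg) (auto simp: lo_nn hi_nn)
  have [measurable]: "g i \<in> borel_measurable borel" for i unfolding g_def by measurable
  have pt: "(if a \<le> Mx H \<xi> \<and> ereal (Mx H \<xi>) < b then 0 else 1) * (Kf H p x \<xi> - Kf H p y \<xi>)^2 \<le> (\<Sum>i\<in>UNIV. g i \<xi>)" for \<xi>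
  proof (cases "a \<le> Mx H \<xi> \<and> ereal (Mx H \<xi>) < b")
    case True then show ?thesis by (simp add: sum_nonneg g0)
  next
    case False
    show ?thesis
    proof (cases "Mx H \<xi> < a")
      case True
      have "\<bar>\<xi>$i\<bar> powr (H$i) < a" for i
        using True Max_ge[of "range (\<lambda>i. \<bar>\<xi>$i\<bar> powr (H$i))" "\<bar>\<xi>$i\<bar> powr (H$i)"] by (auto simp: Mx_def)
      then have "(Kf H p x \<xi> - Kf H p y \<xi>)^2 \<le> CARD('n) * (\<Sum>i\<in>UNIV. \<Prod>j\<in>UNIV. lo H m x y a i j (\<xi>$j))"
        by (intro low_pt x y m)
      also have "\<dots> \<le> (\<Sum>i\<in>UNIV. g i \<xi>)" unfolding g_def sum_distrib_left sum.distrib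
        by (intro add_increasing2 sum_nonneg) (auto simp: cb_def hi_nn prod_nonneg)
      finally show ?thesis using False by (simp add: sum_nonneg g0)
    next
      case False2: False
      with False have "b \<le> ereal (Mx H \<xi>)" by auto
      then have bfin: "b \<noteq> \<infinity>" by auto
      have b\<beta>: "b = ereal \<beta>" using ab bfin unfolding \<beta>_def by (cases b) auto
      have "Mx H \<xi> \<in> range (\<lambda>i. \<bar>\<xi>$i\<bar> powr (H$i))"
        unfolding Mx_def by (rule Max_in) auto
      then obtain i where i: "Mx H \<xi> = \<bar>\<xi>$i\<bar> powr (H$i)" by auto
      have "\<beta> \<le> \<bar>\<xi>$i\<bar> powr (H$i)" using \<open>b \<le> ereal (Mx H \<xi>)\<close> i b\<beta> by simp
      then have "(Kf H p x \<xi> - Kf H p y \<xi>)^2 \<le> 4 * (\<Prod>j\<in>UNIV. hi H m \<beta> i j (\<xi>$j))"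
        by (intro high_pt x y m)
      also have "\<dots> \<le> g i \<xi>" unfolding g_def cb_def using bfin
        by (auto intro!: mult_nonneg_nonneg prod_nonneg simp: lo_nn)
      also have "\<dots> \<le> (\<Sum>i\<in>UNIV. g i \<xi>)" by (rule member_le_sum) (auto simp: g0)
      finally show ?thesis using False by (simp add: sum_nonneg g0)
    qed
  qed
  have "(\<integral>\<^sup>+\<xi>. ennreal ((if a \<le> Mx H \<xi> \<and> ereal (Mx H \<xi>) < b then 0 else 1) * (Kf H p x \<xi> - Kf H p y \<xi>)^2) \<partial>lborel)
     \<le> (\<integral>\<^sup>+\<xi>. (\<Sum>i\<in>UNIV. ennreal (g i \<xi>)) \<partial>lborel)"
  proof (intro nn_integral_mono)
    fix \<xi> :: "real^'n"
    have e: "(\<Sum>i\<in>UNIV. ennreal (g i \<xi>)) = ennreal (\<Sum> i\<in>UNIV. g i \<xi>)" by (rule sum_ennreal) (simp add: g0)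
    show "ennreal ((if a \<le> Mx H \<xi> \<and> ereal (Mx H \<xi>) < b then 0 else 1) * (Kf H p x \<xi> - Kf H p y \<xi>)^2) \<le> (\<Sum>i\<in>UNIV. ennreal (g i \<xi>))"
      unfolding e by (rule ennreal_leI[OF pt])
  qed
  also have "\<dots> = (\<Sum>i\<in>UNIV. \<integral>\<^sup>+\<xi>. ennreal (g i \<xi>) \<partial>lborel)"
    by (rule nn_integral_sum) auto
  also have "\<dots> \<le> (\<Sum>i\<in>UNIV. ennreal (CARD('n) * (P0 H m * (1/(1-H$i)) * (a powr (1/H$i - 1) * \<bar>x$i - y$i\<bar>)^2)
        + cb * 4 * (P0 H m * (4*m^2/H$i) * (1/\<beta>)^2)))"
  proof (intro sum_mono)
    fix i
    have "(\<integral>\<^sup>+\<xi>. ennreal (g i \<xi>) \<partial>lborel) = ennreal (CARD('n)) * (\<integral>\<^sup>+\<xi>. ennreal (\<Prod>j\<in>UNIV. lo H m x y a i j (\<xi>$j)) \<partial>(lborel :: (real^'n) measure))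
         + ennreal (cb * 4) * (\<integral>\<^sup>+\<xi>. ennreal (\<Prod>j\<in>UNIV. hi H m \<beta> i j (\<xi>$j)) \<partial>lborel)"
    proof -
      have cb0: "0 \<le> cb" by (simp add: cb_def)
      have "(\<integral>\<^sup>+\<xi>. ennreal (g i \<xi>) \<partial>lborel) = (\<integral>\<^sup>+\<xi>. ennreal (CARD('n) * (\<Prod>j\<in>UNIV. lo H m x y a i j (\<xi>$j)))
          + ennreal (cb * 4 * (\<Prod>j\<in>UNIV. hi H m \<beta> i j (\<xi>$j))) \<partial>lborel)"
        unfolding g_def by (intro nn_integral_cong ennreal_plus) (auto simp: cb0 prod_nonneg lo_nn hi_nn)
      also have "\<dots> = (\<integral>\<^sup>+\<xi>. ennreal (CARD('n) * (\<Prod>j\<in>UNIV. lo H m x y a i j (\<xi>$j))) \<partial>lborel)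
          + (\<integral>\<^sup>+\<xi>. ennreal (cb * 4 * (\<Prod>j\<in>UNIV. hi H m \<beta> i j (\<xi>$j))) \<partial>lborel)"
        by (rule nn_integral_add) auto
      also have "(\<integral>\<^sup>+\<xi>. ennreal (CARD('n) * (\<Prod>j\<in>UNIV. lo H m x y a i j (\<xi>$j))) \<partial>lborel)
          = ennreal (CARD('n)) * (\<integral>\<^sup>+\<xi>. ennreal (\<Prod>j\<in>UNIV. lo H m x y a i j (\<xi>$j)) \<partial>(lborel :: (real^'n) measure))"
        by (subst nn_integral_cmult[symmetric]) (auto simp: ennreal_mult prod_nonneg lo_nn)
      also have "(\<integral>\<^sup>+\<xi>. ennreal (cb * 4 * (\<Prod>j\<in>UNIV. hi H m \<beta> i j (\<xi>$j))) \<partial>lborel)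
          = ennreal (cb * 4) * (\<integral>\<^sup>+\<xi>. ennreal (\<Prod>j\<in>UNIV. hi H m \<beta> i j (\<xi>$j)) \<partial>(lborel :: (real^'n) measure))"
        by (subst nn_integral_cmult[symmetric]) (auto simp: ennreal_mult cb0 prod_nonneg hi_nn)
      finally show ?thesis .
    qed
    also have "\<dots> \<le> ennreal (CARD('n)) * ennreal (P0 H m * (1/(1-H$i)) * (a powr (1/H$i - 1) * \<bar>x$i - y$i\<bar>)^2)
         + ennreal (cb * 4) * ennreal (P0 H m * (4*m^2/H$i) * (1/\<beta>)^2)"
    proof (rule add_mono)
      show "ennreal (CARD('n)) * (\<integral>\<^sup>+\<xi>. ennreal (\<Prod>j\<in>UNIV. lo H m x y a i j (\<xi>$j)) \<partial>lborel) \<le> ennreal (CARD('n)) * ennreal (P0 H m * (1/(1-H$i)) * (a powr (1/H$i - 1) * \<bar>x$i - y$i\<bar>)^2)"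
        by (intro mult_left_mono lo_int[OF H a]) auto
      show "ennreal (cb * 4) * (\<integral>\<^sup>+\<xi>. ennreal (\<Prod>j\<in>UNIV. hi H m \<beta> i j (\<xi>$j)) \<partial>lborel)
         \<le> ennreal (cb * 4) * ennreal (P0 H m * (4*m^2/H$i) * (1/\<beta>)^2)"
      proof (cases "b = \<infinity>")
        case True then show ?thesis by (simp add: cb_def)
      next
        case False
        then have "\<beta> > 0" using ab a unfolding \<beta>_def by (cases b) auto
        then show ?thesis by (intro mult_left_mono hi_int[OF H]) auto
      qed
    qed
    also have "\<dots> = ennreal (CARD('n) * (P0 H m * (1/(1-H$i)) * (a powr (1/H$i - 1) * \<bar>x$i - y$i\<bar>)^2)
        + cb * 4 * (P0 H m * (4*m^2/H$i) * (1/\<beta>)^2))"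
      using P0_ge[of H m] H[of i]
      by (subst ennreal_plus) (auto simp: cb_def ennreal_mult[symmetric] intro!: mult_nonneg_nonneg)
    finally show "(\<integral>\<^sup>+\<xi>. ennreal (g i \<xi>) \<partial>lborel) \<le> \<dots>" .
  qed
  also have "\<dots> = ennreal (\<Sum>i\<in>UNIV. CARD('n) * (P0 H m * (1/(1-H$i)) * (a powr (1/H$i - 1) * \<bar>x$i - y$i\<bar>)^2)
        + cb * 4 * (P0 H m * (4*m^2/H$i) * (1/\<beta>)^2))"
    using P0_ge[of H m] H
    by (subst sum_ennreal) (auto simp: cb_def less_imp_le intro!: add_nonneg_nonneg mult_nonneg_nonneg)
  also have "\<dots> \<le> ennreal (CARD('n) * P0 H m * (\<Sum>j\<in>UNIV. 1/(1-H$j)) * (\<Sum>i\<in>UNIV. (a powr (1/H$i - 1) * \<bar>x$i - y$i\<bar>)^2)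
               + 16 * m^2 * P0 H m * (\<Sum>j\<in>UNIV. 1/H$j) * (if b = \<infinity> then 0 else (1 / real_of_ereal b)^2))"
  proof (rule ennreal_leI)
    define s where "s i = (a powr (1/H$i - 1) * \<bar>x$i - y$i\<bar>)^2" for i
    have SL: "1/(1-H$i) \<le> (\<Sum>j\<in>UNIV. 1/(1-H$j))" for i
      by (rule member_le_sum) (use H in \<open>auto simp: less_imp_le\<close>)
    have "(\<Sum>i\<in>UNIV. CARD('n) * (P0 H m * (1/(1-H$i)) * s i)) \<le> (\<Sum>i\<in>UNIV. CARD('n) * (P0 H m * (\<Sum>j\<in>UNIV. 1/(1-H$j)) * s i))"
      using P0_ge[of H m]
      by (intro sum_mono mult_left_mono mult_right_mono SL) (auto simp: s_def)
    also have "\<dots> = CARD('n) * P0 H m * (\<Sum>j\<in>UNIV. 1/(1-H$j)) * (\<Sum>i\<in>UNIV. s i)"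
      by (simp only: sum_distrib_left[symmetric] mult.assoc)
    finally have 1: "(\<Sum>i\<in>UNIV. CARD('n) * (P0 H m * (1/(1-H$i)) * s i)) \<le> \<dots>" .
    have 2: "(\<Sum>i\<in>UNIV. cb * 4 * (P0 H m * (4*m^2/H$i) * (1/\<beta>)^2))
        = 16 * m^2 * P0 H m * (\<Sum>j\<in>UNIV. 1/H$j) * (if b = \<infinity> then 0 else (1 / real_of_ereal b)^2)"
      by (simp add: cb_def \<beta>_def sum_distrib_left sum_distrib_right mult_ac)
    show "(\<Sum>i\<in>UNIV. CARD('n) * (P0 H m * (1/(1-H$i)) * (a powr (1/H$i - 1) * \<bar>x$i - y$i\<bar>)^2)
        + cb * 4 * (P0 H m * (4*m^2/H$i) * (1/\<beta>)^2)) \<le> CARD('n) * P0 H m * (\<Sum>j\<in>UNIV. 1/(1-H$j)) * (\<Sum>i\<in>UNIV. (a powr (1/H$i - 1) * \<bar>x$i - y$i\<bar>)^2)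
               + 16 * m^2 * P0 H m * (\<Sum>j\<in>UNIV. 1/H$j) * (if b = \<infinity> then 0 else (1 / real_of_ereal b)^2)"
      using 1 2 unfolding s_def sum.distrib by linarith
  qed
  finally show ?thesis .
qed

lemma vec_nth_meas[measurable]: "(\<lambda>\<xi>::real^'n::finite. \<xi> $ i) \<in> borel_measurable borel"
  by (intro borel_measurable_continuous_onI continuous_intros)

lemma fp_meas[measurable]: "fp p \<in> borel_measurable borel"
  unfolding fp_def by (cases p) auto

lemma Kf_meas[measurable]: "(\<lambda>\<xi>::real^'n::finite. Kf H p x \<xi>) \<in> borel_measurable borel"
  unfolding Kf_def uk_def by measurable

lemma Mx_meas[measurable]: "(\<lambda>\<xi>::real^'n::finite. Mx H \<xi>) \<in> borel_measurable borel"
  unfolding Mx_def by measurable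

lemma kernel_eq: "fbs_kernel H A x k ((p, k'), \<xi>) = (if k' = k \<and> Mx H \<xi> \<in> A then c_H H * Kf H p x \<xi> else 0)"
  by (simp add: fbs_kernel_def Mx_def Kf_def uk_def)

lemma kernel_meas:
  fixes H :: "real^'n::finite" and k :: "'d::finite"
  assumes A: "A \<in> sets borel"
  shows "fbs_kernel H A x k \<in> borel_measurable (count_space UNIV \<Otimes>\<^sub>M (lborel :: (real^'n) measure))"
proof (rule measurable_pair_measure_countable1)
  show "countable (UNIV :: (('n \<Rightarrow> bool) \<times> 'd) set)" by (rule countable_finite) simp
  fix pk :: "('n \<Rightarrow> bool) \<times> 'd"
  obtain p k' where pk: "pk = (p, k')" by (cases pk)
  have "(\<lambda>\<xi>. fbs_kernel H A x k (pk, \<xi>)) = (\<lambda>\<xi>. if k' = k \<and> Mx H \<xi> \<in> A then c_H H * Kf H p x \<xi> else 0)"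
    by (simp add: pk kernel_eq)
  also have "\<dots> \<in> borel_measurable lborel" using A by measurable
  finally show "(\<lambda>\<xi>. fbs_kernel H A x k (pk, \<xi>)) \<in> borel_measurable lborel" .
qed

lemma set_A_borel: "{r::real. a \<le> r \<and> ereal r < b} \<in> sets borel"
proof -
  have "{r::real. a \<le> r \<and> ereal r < b} = {r. a \<le> r} \<inter> {r. ereal r < b}" by auto
  moreover have "{r::real. ereal r < b} \<in> sets borel" by measurable
  ultimately show ?thesis by measurable
qed

lemma nn_S:
  fixes F :: "(('n::finite \<Rightarrow> bool) \<times> 'd::finite) \<times> (real^'n) \<Rightarrow> ennreal"
  assumes "F \<in> borel_measurable (count_space UNIV \<Otimes>\<^sub>M lborel)"
  shows "(\<integral>\<^sup>+s. F s \<partial>(count_space UNIV \<Otimes>\<^sub>M lborel)) = (\<Sum>pk\<in>UNIV. \<integral>\<^sup>+\<xi>. F (pk, \<xi>) \<partial>lborel)"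
  by (simp add: lborel.nn_integral_fst[OF assms, symmetric] nn_integral_count_space_finite)

lemma prod_phi_fin:
  fixes H :: "real^'n::finite"
  assumes H: "\<And>i. 0 < H$i \<and> H$i < 1"
  shows "(\<integral>\<^sup>+\<xi>. ennreal (\<Prod>j\<in>UNIV. 4*m^2*phi (H$j) (\<xi>$j)) \<partial>(lborel :: (real^'n) measure)) < \<infinity>"
proof -
  have "(\<integral>\<^sup>+\<xi>. ennreal (\<Prod>j\<in>UNIV. 4*m^2*phi (H$j) (\<xi>$j)) \<partial>(lborel :: (real^'n) measure)) \<le> ennreal (\<Prod>j\<in>UNIV. 4*m^2*Phi (H$j))"
  proof (rule prod_bound)
    fix j
    show "(\<integral>\<^sup>+t. ennreal (4*m^2*phi (H$j) t) \<partial>lborel) \<le> ennreal (4*m^2*Phi (H$j))"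
      by (subst nn_cmult) (auto simp: phi_nn Phi_eq H Phi_nn ennreal_mult)
  qed (auto simp: phi_nn Phi_nn)
  also have "\<dots> < \<infinity>" by simp
  finally show ?thesis .
qed

lemma sq_int_kernel:
  fixes H x :: "real^'n::finite" and k :: "'d::finite"
  assumes H: "\<And>i. 0 < H$i \<and> H$i < 1" and x: "\<And>i. \<bar>x$i\<bar> \<le> m" and m: "1 \<le> m" and A: "A \<in> sets borel"
  shows "integrable (count_space UNIV \<Otimes>\<^sub>M lborel) (\<lambda>s. (fbs_kernel H A x k s)^2)"
proof -
  let ?S = "count_space UNIV \<Otimes>\<^sub>M (lborel :: (real^'n) measure)"
  have [measurable]: "fbs_kernel H A x k \<in> borel_measurable ?S" by (rule kernel_meas[OF A])
  have "(\<integral>\<^sup>+s. ennreal ((fbs_kernel H A x k s)^2) \<partial>?S) = (\<Sum>pk\<in>UNIV. \<integral>\<^sup>+\<xi>. ennreal ((fbs_kernel H A x k (pk, \<xi>))^2) \<partial>lborel)"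
    by (rule nn_S) measurable
  also have "\<dots> < top"
  proof -
   have "(\<integral>\<^sup>+\<xi>. ennreal ((fbs_kernel H A x k (pk, \<xi>))^2) \<partial>lborel) < top" for pk :: "('n \<Rightarrow> bool) \<times> 'd"
   proof -
    obtain p k' where pk: "pk = (p, k')" by (cases pk)
    have "(\<integral>\<^sup>+\<xi>. ennreal ((fbs_kernel H A x k (pk, \<xi>))^2) \<partial>lborel)
       \<le> (\<integral>\<^sup>+\<xi>. ennreal ((c_H H)^2) * ennreal (\<Prod>j\<in>UNIV. 4*m^2*phi (H$j) (\<xi>$j)) \<partial>lborel)"
    proof (intro nn_integral_mono)
      fix \<xi> :: "real^'n"
      have "(fbs_kernel H A x k (pk, \<xi>))^2 \<le> (c_H H)^2 * (Kf H p x \<xi>)^2"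
        by (simp add: pk kernel_eq power_mult_distrib)
      also have "\<dots> \<le> (c_H H)^2 * (\<Prod>j\<in>UNIV. 4*m^2*phi (H$j) (\<xi>$j))"
        by (intro mult_left_mono Kf_sq x m) auto
      finally show "ennreal ((fbs_kernel H A x k (pk, \<xi>))^2) \<le> ennreal ((c_H H)^2) * ennreal (\<Prod>j\<in>UNIV. 4*m^2*phi (H$j) (\<xi>$j))"
        by (subst ennreal_mult[symmetric]) (auto intro!: ennreal_leI prod_nonneg simp: phi_nn)
    qed
    also have "\<dots> = ennreal ((c_H H)^2) * (\<integral>\<^sup>+\<xi>. ennreal (\<Prod>j\<in>UNIV. 4*m^2*phi (H$j) (\<xi>$j)) \<partial>(lborel :: (real^'n) measure))"
      by (rule nn_integral_cmult) measurable
    also have "\<dots> < \<infinity>" using prod_phi_fin[OF H, of m] by (simp add: ennreal_mult_less_top)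
    finally show "(\<integral>\<^sup>+\<xi>. ennreal ((fbs_kernel H A x k (pk, \<xi>))^2) \<partial>lborel) < top" by simp
   qed
   then show ?thesis by simp
  qed
  finally have fin: "(\<integral>\<^sup>+s. ennreal ((fbs_kernel H A x k s)^2) \<partial>?S) < \<infinity>" by simp
  show ?thesis
    unfolding integrable_iff_bounded using fin by (auto simp: power2_abs)
qed

lemma W_meas: "isonormal P S W \<Longrightarrow> f \<in> borel_measurable S \<Longrightarrow> integrable S (\<lambda>s. (f s)^2) \<Longrightarrow> W f \<in> borel_measurable P"
  unfolding isonormal_def by blast

lemma W_lin: "isonormal P S W \<Longrightarrow> f \<in> borel_measurable S \<Longrightarrow> integrable S (\<lambda>s. (f s)^2) \<Longrightarrow>
   g \<in> borel_measurable S \<Longrightarrow> integrable S (\<lambda>s. (g s)^2) \<Longrightarrow>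
   AE \<omega> in P. W (\<lambda>s. a * f s + b * g s) \<omega> = a * W f \<omega> + b * W g \<omega>"
  unfolding isonormal_def by blast

lemma W_sq:
  assumes iso: "isonormal P S W" and f: "f \<in> borel_measurable S" "integrable S (\<lambda>s. (f s)^2)"
  shows "(\<integral>\<omega>. (W f \<omega>)^2 \<partial>P) = (\<integral>s. (f s)^2 \<partial>S)"
proof -
  have ps: "prob_space P" using iso by (simp add: isonormal_def)
  have Wm: "W f \<in> borel_measurable P" using W_meas[OF iso f] .
  have D: "if (\<integral>s. (f s)^2 \<partial>S) = 0 then (AE \<omega> in P. W f \<omega> = 0)
         else distributed P lborel (W f) (normal_density 0 (sqrt (\<integral>s. (f s)^2 \<partial>S)))"
    using iso f unfolding isonormal_def by blast
  show ?thesis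
  proof (cases "(\<integral>s. (f s)^2 \<partial>S) = 0")
    case True
    then have "AE \<omega> in P. W f \<omega> = 0" using D by simp
    then have ae: "AE \<omega> in P. (W f \<omega>)^2 = 0" by eventually_elim simp
    have m2: "(\<lambda>\<omega>. (W f \<omega>)^2) \<in> borel_measurable P" using Wm by measurable
    have "(\<integral>\<omega>. (W f \<omega>)^2 \<partial>P) = (\<integral>\<omega>. 0 \<partial>P)"
      by (rule integral_cong_AE[OF m2 _ ae]) simp
    then show ?thesis using True by simp
  next
    case False
    define I where "I = (\<integral>s. (f s)^2 \<partial>S)"
    have "I \<ge> 0" unfolding I_def by (rule integral_nonneg_AE) auto
    moreover have "I \<noteq> 0" using False by (simp add: I_def)
    ultimately have Ipos: "I > 0" by linarith
    have Dn: "distributed P lborel (W f) (normal_density 0 (sqrt I))" using D False by (simp add: I_def)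
    have E: "(\<integral>\<omega>. W f \<omega> \<partial>P) = 0"
      using prob_space.normal_distributed_expectation[OF ps _ Dn] Ipos by simp
    have "(\<integral>\<omega>. (W f \<omega> - (\<integral>\<omega>. W f \<omega> \<partial>P))^2 \<partial>P) = (sqrt I)^2"
      using prob_space.normal_distributed_variance[OF ps _ Dn] Ipos by simp
    then show ?thesis using E Ipos by (simp add: I_def)
  qed
qed

lemma sq_int_lin:
  fixes f g :: "'s \<Rightarrow> real"
  assumes "f \<in> borel_measurable S" "integrable S (\<lambda>s. (f s)^2)" "g \<in> borel_measurable S" "integrable S (\<lambda>s. (g s)^2)"
  shows "(\<lambda>s. a * f s + b * g s) \<in> borel_measurable S \<and> integrable S (\<lambda>s. (a * f s + b * g s)^2)"
proof
  show m: "(\<lambda>s. a * f s + b * g s) \<in> borel_measurable S" using assms by measurable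
  show "integrable S (\<lambda>s. (a * f s + b * g s)^2)"
  proof (rule Bochner_Integration.integrable_bound[where f="\<lambda>s. 2 * a^2 * (f s)^2 + 2 * b^2 * (g s)^2"])
    show "integrable S (\<lambda>s. 2 * a^2 * (f s)^2 + 2 * b^2 * (g s)^2)" using assms by auto
    show "(\<lambda>s. (a * f s + b * g s)^2) \<in> borel_measurable S" using m by measurable
    have uv: "(u + v)^2 \<le> 2 * u^2 + 2 * v^2" for u v :: real
    proof -
      have "0 \<le> (u - v)^2" by simp
      then show ?thesis by (simp add: power2_sum power2_diff)
    qed
    have "(a * f s + b * g s)^2 \<le> 2 * a^2 * (f s)^2 + 2 * b^2 * (g s)^2" for s
      using uv[of "a * f s" "b * g s"] by (simp add: power_mult_distrib)
    then show "AE s in S. norm ((a * f s + b * g s)^2) \<le> norm (2 * a^2 * (f s)^2 + 2 * b^2 * (g s)^2)"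
      by (auto intro!: AE_I2 simp: abs_of_nonneg)
  qed
qed

lemma norm_vec_sq: "(norm (v::real^'d::finite))^2 = (\<Sum>k\<in>UNIV. (v$k)^2)"
  by (simp add: norm_vec_def L2_set_def sum_nonneg)

lemma sum_sq_le: fixes s :: "'i \<Rightarrow> real" assumes "finite I" "\<And>i. 0 \<le> s i"
  shows "(\<Sum>i\<in>I. (s i)^2) \<le> (\<Sum>i\<in>I. s i)^2"
proof -
  have "L2_set s I \<le> sum s I" by (rule L2_set_le_sum) (simp add: assms)
  then have "(L2_set s I)^2 \<le> (sum s I)^2" by (intro power_mono) (auto simp: L2_set_def intro!: sum_nonneg)
  moreover have "0 \<le> (\<Sum>i\<in>I. (s i)^2)" by (rule sum_nonneg) simp
  ultimately show ?thesis by (simp add: L2_set_def)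
qed

theorem lemma5p1:
  fixes H :: "real^'n::finite"
    and P :: "'a measure"
    and W :: "((('n \<Rightarrow> bool) \<times> 'd::finite) \<times> (real^'n) \<Rightarrow> real) \<Rightarrow> 'a \<Rightarrow> real"
    and n :: nat
  assumes H: "\<And>i. 0 < H $ i \<and> H $ i < 1"
    and W: "white_noise_family P W"
    and n: "n > 1"
  shows "\<exists>c0 > 0. \<forall>(a::real) (b::ereal) (x::real^'n) (y::real^'n).
     0 \<le> a \<and> ereal a < b \<and>
     (\<forall>i. 1 / real n \<le> x $ i \<and> x $ i \<le> real n) \<and>
     (\<forall>i. 1 / real n \<le> y $ i \<and> y $ i \<le> real n) \<longrightarrow>
     L2norm P (\<lambda>\<omega>. (fbs H W x \<omega> - fbs_part H W {r. a \<le> r \<and> ereal r < b} x \<omega>)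
                   - (fbs H W y \<omega> - fbs_part H W {r. a \<le> r \<and> ereal r < b} y \<omega>))
       \<le> c0 * ((\<Sum>i\<in>UNIV. a powr (1 / H $ i - 1) * \<bar>x $ i - y $ i\<bar>)
               + (if b = \<infinity> then 0 else 1 / real_of_ereal b))"
proof -
  let ?S = "count_space UNIV \<Otimes>\<^sub>M (lborel :: (real^'n) measure)"
  have iso: "isonormal P ?S W" using W by (simp add: white_noise_family_def)
  define m where "m = real n"
  have m1: "1 \<le> m" using n by (simp add: m_def)
  define CL where "CL = CARD('n) * P0 H m * (\<Sum>j\<in>UNIV. 1/(1-H$j))"
  define CH where "CH = 16 * m^2 * P0 H m * (\<Sum>j\<in>UNIV. 1/H$j)"
  define C1 where "C1 = real CARD(('n \<Rightarrow> bool) \<times> 'd) * (c_H H)^2"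
  define D where "D = CARD('d) * C1"
  define c0 where "c0 = sqrt (D * max CL CH) + 1"
  have P0: "1 \<le> P0 H m" by (rule P0_ge)
  have CL0: "0 \<le> CL" unfolding CL_def using P0 H
    by (intro mult_nonneg_nonneg sum_nonneg) (auto simp: less_imp_le)
  have CH0: "0 \<le> CH" unfolding CH_def using P0 H
    by (intro mult_nonneg_nonneg sum_nonneg) (auto simp: less_imp_le)
  have D0: "0 \<le> D" by (simp add: D_def C1_def)
  have "0 \<le> D * max CL CH" using D0 CL0 by (intro mult_nonneg_nonneg) auto
  then have c0pos: "c0 > 0" unfolding c0_def by (smt (verit) real_sqrt_ge_zero)
  show ?thesis
  proof (intro exI[of _ c0] conjI allI impI c0pos)
    fix a :: real and b :: ereal and x y :: "real^'n"
    assume asm: "0 \<le> a \<and> ereal a < b \<and> (\<forall>i. 1 / real n \<le> x $ i \<and> x $ i \<le> real n) \<and>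
      (\<forall>i. 1 / real n \<le> y $ i \<and> y $ i \<le> real n)"
    have a: "0 \<le> a" and ab: "ereal a < b" using asm by auto
    have npos: "0 < 1 / real n" using n by simp
    have xm: "\<bar>x$i\<bar> \<le> m" for i using asm npos[THEN order_less_le_trans, of "x$i"] by (auto simp: m_def)
    have ym: "\<bar>y$i\<bar> \<le> m" for i using asm npos[THEN order_less_le_trans, of "y$i"] by (auto simp: m_def)
    define A where "A = {r. a \<le> r \<and> ereal r < b}"
    have Ab: "A \<in> sets borel" unfolding A_def by (rule set_A_borel)
    have Ub: "UNIV \<in> sets borel" by simp
    define kx where "kx k = fbs_kernel H UNIV x k" for k :: 'd
    define kxA where "kxA k = fbs_kernel H A x k" for k :: 'd
    define ky where "ky k = fbs_kernel H UNIV y k" for k :: 'd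
    define kyA where "kyA k = fbs_kernel H A y k" for k :: 'd
    have kxm: "kx k \<in> borel_measurable ?S" "integrable ?S (\<lambda>s. (kx k s)^2)" for k
      unfolding kx_def by (rule kernel_meas[OF Ub], rule sq_int_kernel[OF H xm m1 Ub])
    have kxAm: "kxA k \<in> borel_measurable ?S" "integrable ?S (\<lambda>s. (kxA k s)^2)" for k
      unfolding kxA_def by (rule kernel_meas[OF Ab], rule sq_int_kernel[OF H xm m1 Ab])
    have kym: "ky k \<in> borel_measurable ?S" "integrable ?S (\<lambda>s. (ky k s)^2)" for k
      unfolding ky_def by (rule kernel_meas[OF Ub], rule sq_int_kernel[OF H ym m1 Ub])
    have kyAm: "kyA k \<in> borel_measurable ?S" "integrable ?S (\<lambda>s. (kyA k s)^2)" for k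
      unfolding kyA_def by (rule kernel_meas[OF Ab], rule sq_int_kernel[OF H ym m1 Ab])
    define gx where "gx k = (\<lambda>s. 1 * kx k s + (-1) * kxA k s)" for k
    define gy where "gy k = (\<lambda>s. 1 * ky k s + (-1) * kyA k s)" for k
    define g where "g k = (\<lambda>s. 1 * gx k s + (-1) * gy k s)" for k
    have gxm: "gx k \<in> borel_measurable ?S" "integrable ?S (\<lambda>s. (gx k s)^2)" for k
      using sq_int_lin[OF kxm(1)[of k] kxm(2)[of k] kxAm(1)[of k] kxAm(2)[of k], of 1 "-1"] unfolding gx_def by auto
    have gym: "gy k \<in> borel_measurable ?S" "integrable ?S (\<lambda>s. (gy k s)^2)" for k
      using sq_int_lin[OF kym(1)[of k] kym(2)[of k] kyAm(1)[of k] kyAm(2)[of k], of 1 "-1"] unfolding gy_def by auto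
    have gm: "g k \<in> borel_measurable ?S" "integrable ?S (\<lambda>s. (g k s)^2)" for k
      using sq_int_lin[OF gxm(1)[of k] gxm(2)[of k] gym(1)[of k] gym(2)[of k], of 1 "-1"] unfolding g_def by auto
    define X where "X = (\<lambda>\<omega>. (fbs H W x \<omega> - fbs_part H W A x \<omega>) - (fbs H W y \<omega> - fbs_part H W A y \<omega>))"
    have Xk: "X \<omega> $ k = W (kx k) \<omega> - W (kxA k) \<omega> - (W (ky k) \<omega> - W (kyA k) \<omega>)" for \<omega> k
      by (simp add: X_def fbs_def fbs_part_def kx_def kxA_def ky_def kyA_def)
    have Xkm: "(\<lambda>\<omega>. X \<omega> $ k) \<in> borel_measurable P" for k
      unfolding Xk using W_meas[OF iso kxm(1)[of k] kxm(2)[of k]] W_meas[OF iso kxAm(1)[of k] kxAm(2)[of k]] W_meas[OF iso kym(1)[of k] kym(2)[of k]] W_meas[OF iso kyAm(1)[of k] kyAm(2)[of k]]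
      by measurable
    have AEk: "AE \<omega> in P. X \<omega> $ k = W (g k) \<omega>" for k
      using W_lin[OF iso kxm(1)[of k] kxm(2)[of k] kxAm(1)[of k] kxAm(2)[of k], of 1 "-1"] W_lin[OF iso kym(1)[of k] kym(2)[of k] kyAm(1)[of k] kyAm(2)[of k], of 1 "-1"]
        W_lin[OF iso gxm(1)[of k] gxm(2)[of k] gym(1)[of k] gym(2)[of k], of 1 "-1"]
      unfolding g_def gx_def gy_def
      by eventually_elim (simp add: Xk)
    define SS where "SS = (\<Sum>i\<in>UNIV. (a powr (1/H$i - 1) * \<bar>x$i - y$i\<bar>)^2)"
    define t where "t = (if b = \<infinity> then 0 else 1 / real_of_ereal b)"
    define Bd where "Bd = CL * SS + CH * t^2"
    have t0: "0 \<le> t" unfolding t_def using ab a by (cases b) auto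
    have Bd0: "0 \<le> Bd" unfolding Bd_def SS_def using CL0 CH0 by (intro add_nonneg_nonneg mult_nonneg_nonneg sum_nonneg) auto
    have TI: "(\<integral>\<^sup>+\<xi>. ennreal ((if a \<le> Mx H \<xi> \<and> ereal (Mx H \<xi>) < b then 0 else 1) * (Kf H p x \<xi> - Kf H p y \<xi>)^2) \<partial>lborel)
      \<le> ennreal Bd" for p
    proof -
      have "(if b = \<infinity> then 0 else (1 / real_of_ereal b)^2) = t^2" by (simp add: t_def)
      then show ?thesis using total_int[OF H xm ym m1 a ab, of p]
        by (simp add: Bd_def CL_def CH_def SS_def)
    qed
    have gint: "(\<integral>s. (g k s)^2 \<partial>?S) \<le> C1 * Bd" for k
    proof -
      have pt: "(g k ((p, k'), \<xi>))^2 \<le> (c_H H)^2 * ((if a \<le> Mx H \<xi> \<and> ereal (Mx H \<xi>) < b then 0 else 1) * (Kf H p x \<xi> - Kf H p y \<xi>)^2)"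
        for p k' \<xi>
      proof (cases "k' = k")
        case True
        then show ?thesis
          by (cases "a \<le> Mx H \<xi> \<and> ereal (Mx H \<xi>) < b")
             (auto simp: g_def gx_def gy_def kx_def kxA_def ky_def kyA_def kernel_eq A_def
                power_mult_distrib right_diff_distrib[symmetric])
      qed (simp add: g_def gx_def gy_def kx_def kxA_def ky_def kyA_def kernel_eq)
      have "(\<integral>\<^sup>+s. ennreal ((g k s)^2) \<partial>?S) = (\<Sum>pk\<in>UNIV. \<integral>\<^sup>+\<xi>. ennreal ((g k (pk, \<xi>))^2) \<partial>lborel)"
        by (rule nn_S) (use gm(1) in measurable)
      also have "\<dots> \<le> (\<Sum>pk\<in>(UNIV :: (('n \<Rightarrow> bool) \<times> 'd) set). ennreal ((c_H H)^2 * Bd))"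
      proof (intro sum_mono)
        fix pk :: "('n \<Rightarrow> bool) \<times> 'd"
        obtain p k' where pk: "pk = (p, k')" by (cases pk)
        have "(\<integral>\<^sup>+\<xi>. ennreal ((g k (pk, \<xi>))^2) \<partial>lborel)
           \<le> (\<integral>\<^sup>+\<xi>. ennreal ((c_H H)^2) * ennreal ((if a \<le> Mx H \<xi> \<and> ereal (Mx H \<xi>) < b then 0 else 1) * (Kf H p x \<xi> - Kf H p y \<xi>)^2) \<partial>lborel)"
          unfolding pk
        proof (intro nn_integral_mono)
          fix \<xi> :: "real^'n"
          have "ennreal ((g k ((p, k'), \<xi>))^2) \<le> ennreal ((c_H H)^2 * ((if a \<le> Mx H \<xi> \<and> ereal (Mx H \<xi>) < b then 0 else 1) * (Kf H p x \<xi> - Kf H p y \<xi>)^2))"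
            by (rule ennreal_leI[OF pt])
          also have "\<dots> = ennreal ((c_H H)^2) * ennreal ((if a \<le> Mx H \<xi> \<and> ereal (Mx H \<xi>) < b then 0 else 1) * (Kf H p x \<xi> - Kf H p y \<xi>)^2)"
            by (rule ennreal_mult) auto
          finally show "ennreal ((g k ((p, k'), \<xi>))^2) \<le> ennreal ((c_H H)^2) * ennreal ((if a \<le> Mx H \<xi> \<and> ereal (Mx H \<xi>) < b then 0 else 1) * (Kf H p x \<xi> - Kf H p y \<xi>)^2)" .
        qed
        also have "\<dots> = ennreal ((c_H H)^2) * (\<integral>\<^sup>+\<xi>. ennreal ((if a \<le> Mx H \<xi> \<and> ereal (Mx H \<xi>) < b then 0 else 1) * (Kf H p x \<xi> - Kf H p y \<xi>)^2) \<partial>(lborel :: (real^'n) measure))"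
          by (rule nn_integral_cmult) measurable
        also have "\<dots> \<le> ennreal ((c_H H)^2) * ennreal Bd" by (intro mult_left_mono TI) auto
        also have "\<dots> = ennreal ((c_H H)^2 * Bd)" by (simp add: ennreal_mult Bd0)
        finally show "(\<integral>\<^sup>+\<xi>. ennreal ((g k (pk, \<xi>))^2) \<partial>lborel) \<le> ennreal ((c_H H)^2 * Bd)" .
      qed
      also have "\<dots> = ennreal (C1 * Bd)"
        by (simp add: C1_def ennreal_of_nat_eq_real_of_nat ennreal_mult Bd0 mult.assoc)
      finally have le: "(\<integral>\<^sup>+s. ennreal ((g k s)^2) \<partial>?S) \<le> ennreal (C1 * Bd)" .
      have "(\<integral>s. (g k s)^2 \<partial>?S) = enn2real (\<integral>\<^sup>+s. ennreal ((g k s)^2) \<partial>?S)"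
        by (rule integral_eq_nn_integral) (use gm(1) in auto)
      also have "\<dots> \<le> C1 * Bd" by (rule enn2real_leI) (use le Bd0 in \<open>auto simp: C1_def\<close>)
      finally show ?thesis .
    qed
    have Wk: "(\<integral>\<omega>. (X \<omega> $ k)^2 \<partial>P) \<le> C1 * Bd" for k
    proof -
      have m1: "(\<lambda>\<omega>. (X \<omega> $ k)^2) \<in> borel_measurable P" using Xkm[of k] by measurable
      have m2: "(\<lambda>\<omega>. (W (g k) \<omega>)^2) \<in> borel_measurable P" using W_meas[OF iso gm(1)[of k] gm(2)[of k]] by measurable
      have ae: "AE \<omega> in P. (X \<omega> $ k)^2 = (W (g k) \<omega>)^2" using AEk[of k] by eventually_elim simp
      have "(\<integral>\<omega>. (X \<omega> $ k)^2 \<partial>P) = (\<integral>\<omega>. (W (g k) \<omega>)^2 \<partial>P)"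
        by (rule integral_cong_AE[OF m1 m2 ae])
      also have "\<dots> = (\<integral>s. (g k s)^2 \<partial>?S)" by (rule W_sq[OF iso gm(1,2)])
      finally show ?thesis using gint[of k] by simp
    qed
    have IX: "(\<integral>\<omega>. (norm (X \<omega>))^2 \<partial>P) \<le> D * Bd"
    proof (cases "integrable P (\<lambda>\<omega>. (norm (X \<omega>))^2)")
      case True
      have ik: "integrable P (\<lambda>\<omega>. (X \<omega> $ k)^2)" for k
      proof (rule Bochner_Integration.integrable_bound[OF True])
        show "(\<lambda>\<omega>. (X \<omega> $ k)^2) \<in> borel_measurable P" using Xkm[of k] by measurable
        have "(X \<omega> $ k)^2 \<le> (norm (X \<omega>))^2" for \<omega>
          unfolding norm_vec_sq by (rule member_le_sum) auto
        then show "AE \<omega> in P. norm ((X \<omega> $ k)^2) \<le> norm ((norm (X \<omega>))^2)" by auto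
      qed
      have "(\<integral>\<omega>. (norm (X \<omega>))^2 \<partial>P) = (\<integral>\<omega>. (\<Sum>k\<in>UNIV. (X \<omega> $ k)^2) \<partial>P)"
        by (simp add: norm_vec_sq)
      also have "\<dots> = (\<Sum>k\<in>UNIV. \<integral>\<omega>. (X \<omega> $ k)^2 \<partial>P)"
        by (rule Bochner_Integration.integral_sum) (use ik in auto)
      also have "\<dots> \<le> (\<Sum>k\<in>(UNIV :: 'd set). C1 * Bd)" by (intro sum_mono Wk)
      also have "\<dots> = D * Bd" by (simp add: D_def)
      finally show ?thesis .
    next
      case False
      then show ?thesis using D0 Bd0 by (simp add: not_integrable_integral_eq)
    qed
    define s where "s i = a powr (1/H$i - 1) * \<bar>x$i - y$i\<bar>" for i
    have s0: "0 \<le> s i" for i by (simp add: s_def)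
    have SSle: "SS \<le> (\<Sum>i\<in>UNIV. s i)^2" unfolding SS_def s_def[symmetric] by (rule sum_sq_le) (auto simp: s0)
    have "Bd \<le> max CL CH * (SS + t^2)" unfolding Bd_def
      by (smt (verit, ccfv_SIG) CL0 CH0 SS_def distrib_left max.cobounded1 max.cobounded2 mult_right_mono
          zero_le_power2 sum_nonneg)
    also have "\<dots> \<le> max CL CH * ((\<Sum>i\<in>UNIV. s i) + t)^2"
    proof (rule mult_left_mono)
      have "0 \<le> (\<Sum>i\<in>UNIV. s i)" by (intro sum_nonneg s0)
      then have "0 \<le> 2 * (\<Sum>i\<in>UNIV. s i) * t" using t0 by simp
      then show "SS + t^2 \<le> ((\<Sum>i\<in>UNIV. s i) + t)^2" using SSle by (simp add: power2_sum mult.commute mult.left_commute)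
    qed (use CL0 in auto)
    finally have Bdle: "Bd \<le> max CL CH * ((\<Sum>i\<in>UNIV. s i) + t)^2" .
    have sum0: "0 \<le> (\<Sum>i\<in>UNIV. s i) + t" using t0 by (intro add_nonneg_nonneg sum_nonneg s0)
    have "L2norm P X = sqrt (\<integral>\<omega>. (norm (X \<omega>))^2 \<partial>P)" by (simp add: L2norm_def)
    also have "\<dots> \<le> sqrt (D * Bd)" using IX by simp
    also have "\<dots> \<le> sqrt (D * (max CL CH * ((\<Sum>i\<in>UNIV. s i) + t)^2))"
      using Bdle D0 by (intro real_sqrt_le_mono mult_left_mono) auto
    also have "\<dots> = sqrt (D * max CL CH) * ((\<Sum>i\<in>UNIV. s i) + t)"
      using sum0 by (simp add: real_sqrt_mult mult.assoc)
    also have "\<dots> \<le> c0 * ((\<Sum>i\<in>UNIV. s i) + t)"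
      unfolding c0_def using sum0 by (intro mult_right_mono) auto
    finally show "L2norm P (\<lambda>\<omega>. (fbs H W x \<omega> - fbs_part H W {r. a \<le> r \<and> ereal r < b} x \<omega>)
                   - (fbs H W y \<omega> - fbs_part H W {r. a \<le> r \<and> ereal r < b} y \<omega>))
       \<le> c0 * ((\<Sum>i\<in>UNIV. a powr (1 / H $ i - 1) * \<bar>x $ i - y $ i\<bar>)
               + (if b = \<infinity> then 0 else 1 / real_of_ereal b))"
      by (simp add: X_def A_def s_def t_def)
  qed
qed

end
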